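(* Let $n\ge 1$, let $\preceq$ be an admissible order on $L([0,1])$, let $F\colon L([0,1])\times L([0,1])\to L([0,1])$ and $G\colon L([0,1])^n\to L([0,1])$ be functions and let $m\colon 2^N\to L([0,1])$ be an IV fuzzy measure with respect to $\preceq$. Then: (i) if $m$ is symmetric, the triplet $(m,F,G)$ satisfies Condition (WDS) (for arbitrary $F,G$); (ii) if $G=f\circ \mathrm{Proj}_1$ for some function $f\colon L([0,1])\to L([0,1])$, then $(m,F,G)$ satisfies Condition (WDS) for any $m$; (iii) if $F$ is non-decreasing in the second variable and $G=f\circ\vee$ for some function $f\colon L([0,1])\to L([0,1])$, then $(m,F,G)$ satisfies Condition (WDS) for any $m$.
   Context: $N=\{1,\dots,n\}$. $L([0,1])=\{[a,b]: 0\le a\le b\le 1\}$, $\mathbf 0=[0,0]$, $\mathbf 1=[1,1]$. $[a,b]\le_{spo}[c,d]$ iff $a\le c$ and $b\le d$. An admissible order $\preceq$ on $L([0,1])$ is a total order such that $X\le_{spo}Y$ implies $X\preceq Y$. $\vee$ and $\wedge$ denote maximum and minimum with respect to $\preceq$ (of two or of $n$ intervals). An IV fuzzy measure w.r.t. $\preceq$ is $m\colon 2^N\to L([0,1])$ with $m(\emptyset)=\mathbf 0$, $m(N)=\mathbf 1$, $m(A)\preceq m(B)$ for $A\subseteq B$; it is symmetric if $m(A)=m(B)$ whenever $|A|=|B|$. $\mathrm{Proj}_1(X_1,\dots,X_n)=X_1$. Monotonicity (non-decreasing) is with respect to $\preceq$. For a permutation $\sigma$ of $N$, $E_{\sigma(i)}=\{\sigma(i),\dots,\sigma(n)\}$.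 The triplet $(m,F,G)$ satisfies Condition (WDS) if for all $X_1,\dots,X_n\in L([0,1])$ and all permutations $\sigma_1,\sigma_2$ of $N$ with $X_{\sigma_j(1)}\preceq\dots\preceq X_{\sigma_j(n)}$ ($j=1,2$) one has $G\big(F(X_{\sigma_1(1)},m(E_{\sigma_1(1)})),\dots,F(X_{\sigma_1(n)},m(E_{\sigma_1(n)}))\big)=G\big(F(X_{\sigma_2(1)},m(E_{\sigma_2(1)})),\dots,F(X_{\sigma_2(n)},m(E_{\sigma_2(n)}))\big)$. *)

theory Defs
  imports Complex_Main "HOL-Combinatorics.Permutations"
begin

type_synonym ival = "real \<times> real"

text \<open>L([0,1]): intervals [a,b] encoded as pairs (a,b) with 0 <= a <= b <= 1.\<close>
definition LI :: "ival set" where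
  "LI = {(a, b). 0 \<le> a \<and> a \<le> b \<and> b \<le> 1}"

definition zeroI :: ival where "zeroI = (0, 0)"
definition oneI :: ival where "oneI = (1, 1)"

definition spo :: "ival \<Rightarrow> ival \<Rightarrow> bool" where
  "spo X Y \<longleftrightarrow> fst X \<le> fst Y \<and> snd X \<le> snd Y"

definition admissible :: "(ival \<Rightarrow> ival \<Rightarrow> bool) \<Rightarrow> bool" where
  "admissible le \<longleftrightarrow>
     (\<forall>X\<in>LI. le X X) \<and>
     (\<forall>X\<in>LI. \<forall>Y\<in>LI. le X Y \<and> le Y X \<longrightarrow> X = Y) \<and>
     (\<forall>X\<in>LI. \<forall>Y\<in>LI. \<forall>Z\<in>LI. le X Y \<and> le Y Z \<longrightarrow> le X Z) \<and>
     (\<forall>X\<in>LI. \<forall>Y\<in>LI. le X Y \<or> le Y X) \<and>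
     (\<forall>X\<in>LI. \<forall>Y\<in>LI. spo X Y \<longrightarrow> le X Y)"

text \<open>N = {1..n}.\<close>
definition IV_fuzzy_measure ::
  "(ival \<Rightarrow> ival \<Rightarrow> bool) \<Rightarrow> nat \<Rightarrow> (nat set \<Rightarrow> ival) \<Rightarrow> bool" where
  "IV_fuzzy_measure le n m \<longleftrightarrow>
     (\<forall>A. A \<subseteq> {1..n} \<longrightarrow> m A \<in> LI) \<and>
     m {} = zeroI \<and> m {1..n} = oneI \<and>
     (\<forall>A B. A \<subseteq> B \<and> B \<subseteq> {1..n} \<longrightarrow> le (m A) (m B))"

definition symmetric_measure :: "nat \<Rightarrow> (nat set \<Rightarrow> ival) \<Rightarrow> bool" where
  "symmetric_measure n m \<longleftrightarrow>
     (\<forall>A B. A \<subseteq> {1..n} \<and> B \<subseteq> {1..n} \<and> card A = card B \<longrightarrow> m A = m B)"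

definition ivmax :: "(ival \<Rightarrow> ival \<Rightarrow> bool) \<Rightarrow> ival list \<Rightarrow> ival" where
  "ivmax le xs = (THE x. x \<in> set xs \<and> (\<forall>y\<in>set xs. le y x))"

text \<open>Condition (WDS). Elements of L([0,1])^n are lists of length n;
  sigma (i) for i in 1..n; E_{sigma(i)} = sigma ` {i..n}.\<close>
definition WDS ::
  "(ival \<Rightarrow> ival \<Rightarrow> bool) \<Rightarrow> nat \<Rightarrow> (nat set \<Rightarrow> ival) \<Rightarrow> (ival \<Rightarrow> ival \<Rightarrow> ival)
     \<Rightarrow> (ival list \<Rightarrow> ival) \<Rightarrow> bool" where
  "WDS le n m F G \<longleftrightarrow>
     (\<forall>X \<sigma>1 \<sigma>2.
        (\<forall>i\<in>{1..n}. X i \<in> LI) \<and>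
        \<sigma>1 permutes {1..n} \<and> \<sigma>2 permutes {1..n} \<and>
        (\<forall>i. 1 \<le> i \<and> i < n \<longrightarrow> le (X (\<sigma>1 i)) (X (\<sigma>1 (i + 1)))) \<and>
        (\<forall>i. 1 \<le> i \<and> i < n \<longrightarrow> le (X (\<sigma>2 i)) (X (\<sigma>2 (i + 1))))
        \<longrightarrow>
        G (map (\<lambda>i. F (X (\<sigma>1 i)) (m (\<sigma>1 ` {i..n}))) [1..<n+1]) =
        G (map (\<lambda>i. F (X (\<sigma>2 i)) (m (\<sigma>2 ` {i..n}))) [1..<n+1]))"

end

theory Submission
  imports Defs
begin

lemma adm_refl: "admissible le \<Longrightarrow> X \<in> LI \<Longrightarrow> le X X"
  unfolding admissible_def by blast
lemma adm_antisym: "admissible le \<Longrightarrow> X \<in> LI \<Longrightarrow> Y \<in> LI \<Longrightarrow> le X Y \<Longrightarrow> le Y X \<Longrightarrow> X = Y"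
  unfolding admissible_def by blast
lemma adm_trans: "admissible le \<Longrightarrow> X \<in> LI \<Longrightarrow> Y \<in> LI \<Longrightarrow> Z \<in> LI \<Longrightarrow> le X Y \<Longrightarrow> le Y Z \<Longrightarrow> le X Z"
  unfolding admissible_def by blast
lemma adm_total: "admissible le \<Longrightarrow> X \<in> LI \<Longrightarrow> Y \<in> LI \<Longrightarrow> le X Y \<or> le Y X"
  unfolding admissible_def by blast

lemma max_exists:
  assumes adm: "admissible le" and "finite A" "A \<noteq> {}" "A \<subseteq> LI"
  shows "\<exists>x\<in>A. \<forall>y\<in>A. le y x"
  using assms(2-4)
proof (induction A rule: finite_ne_induct)
  case (singleton x)
  then show ?case using adm_refl[OF adm] by auto
next
  case (insert a A)
  then obtain x where x: "x \<in> A" "\<forall>y\<in>A. le y x" by auto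
  have aL: "a \<in> LI" and xL: "x \<in> LI" using insert x by auto
  show ?case
  proof (cases "le x a")
    case True
    then show ?thesis using adm_refl[OF adm aL] adm_trans[OF adm] x insert xL aL
      by (metis insert_iff subset_iff)
  next
    case False
    then have "le a x" using adm_total[OF adm aL xL] by auto
    then show ?thesis using x by auto
  qed
qed

lemma ivmax_prop:
  assumes adm: "admissible le" and "xs \<noteq> []" "set xs \<subseteq> LI"
  shows "ivmax le xs \<in> set xs \<and> (\<forall>y\<in>set xs. le y (ivmax le xs))"
proof -
  obtain x where x: "x \<in> set xs" "\<forall>y\<in>set xs. le y x"
    using max_exists[OF adm, of "set xs"] assms by auto
  have "\<exists>!x. x \<in> set xs \<and> (\<forall>y\<in>set xs. le y x)"
  proof (rule ex1I[of _ x])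
    fix z assume "z \<in> set xs \<and> (\<forall>y\<in>set xs. le y z)"
    then show "z = x" using x adm_antisym[OF adm, of z x] assms(3) by auto
  qed (use x in auto)
  then show ?thesis unfolding ivmax_def by (rule theI')
qed

lemma sorted_wrt_mset_eq:
  assumes "\<forall>x\<in>A. \<forall>y\<in>A. R x y \<and> R y x \<longrightarrow> x = y" "set xs \<subseteq> A"
    "sorted_wrt R xs" "sorted_wrt R ys" "mset xs = mset ys"
  shows "xs = ys"
  using assms(2-5)
proof (induction xs arbitrary: ys)
  case Nil
  then show ?case by simp
next
  case (Cons x xs)
  then obtain y ys' where ys: "ys = y # ys'" by (cases ys) auto
  have xy: "x = y"
  proof (rule ccontr)
    assume ne: "x \<noteq> y"
    have "x \<in> set ys" using Cons(5) by (metis list.set_intros(1) set_mset_mset)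
    then have "x \<in> set ys'" using ne ys by auto
    then have r1: "R y x" using Cons(4) ys by auto
    have "y \<in> set (x # xs)" using Cons(5) ys by (metis list.set_intros(1) set_mset_mset)
    then have "y \<in> set xs" using ne by auto
    then have r2: "R x y" using Cons(3) by auto
    have "y \<in> A" using \<open>y \<in> set xs\<close> Cons(2) by auto
    then show False using assms(1) Cons(2) r1 r2 ne by auto
  qed
  have "xs = ys'"
    using Cons ys xy by auto
  then show ?case using xy ys by simp
qed

lemma sorted_mono:
  assumes adm: "admissible le" and X: "\<forall>i\<in>{1..(n::nat)}. X i \<in> LI" and p: "\<sigma> permutes {1..n}"
    and s: "\<forall>i. 1 \<le> i \<and> i < n \<longrightarrow> le (X (\<sigma> i)) (X (\<sigma> (i+1)))"
    and k: "1 \<le> k" "k \<le> l" "l \<le> n"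
  shows "le (X (\<sigma> k)) (X (\<sigma> l))"
proof -
  have L: "X (\<sigma> i) \<in> LI" if "1 \<le> i" "i \<le> n" for i
    using X permutes_in_image[OF p] that by auto
  from k(2) show ?thesis using k(3)
  proof (induction l rule: dec_induct)
    case base
    then show ?case using adm_refl[OF adm L] k by auto
  next
    case (step j)
    have "le (X (\<sigma> j)) (X (\<sigma> (j+1)))" using s step k by auto
    then show ?case using step adm_trans[OF adm L[of k] L[of j] L[of "Suc j"]] k by auto
  qed
qed

lemma sorted_eq:
  assumes adm: "admissible le" and X: "\<forall>i\<in>{1..(n::nat)}. X i \<in> LI"
    and p1: "\<sigma>1 permutes {1..n}" and p2: "\<sigma>2 permutes {1..n}"
    and s1: "\<forall>i. 1 \<le> i \<and> i < n \<longrightarrow> le (X (\<sigma>1 i)) (X (\<sigma>1 (i+1)))"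
    and s2: "\<forall>i. 1 \<le> i \<and> i < n \<longrightarrow> le (X (\<sigma>2 i)) (X (\<sigma>2 (i+1)))"
  shows "\<forall>i\<in>{1..n}. X (\<sigma>1 i) = X (\<sigma>2 i)"
proof -
  define xs where "xs = map (\<lambda>i. X (\<sigma>1 i)) [1..<n+1]"
  define ys where "ys = map (\<lambda>i. X (\<sigma>2 i)) [1..<n+1]"
  have sw: "sorted_wrt le (map (\<lambda>i. X (\<sigma> i)) [1..<n+1])"
    if p: "\<sigma> permutes {1..n}" and s: "\<forall>i. 1 \<le> i \<and> i < n \<longrightarrow> le (X (\<sigma> i)) (X (\<sigma> (i+1)))" for \<sigma>
    unfolding sorted_wrt_iff_nth_less
    using sorted_mono[OF adm X p s] by (auto simp del: upt_Suc simp: nth_upt)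
  have ms: "mset (map (\<lambda>i. X (\<sigma> i)) [1..<n+1]) = image_mset X (mset_set {1..n})"
    if p: "\<sigma> permutes {1..n}" for \<sigma>
  proof -
    have "mset (map (\<lambda>i. X (\<sigma> i)) [1..<n+1]) = image_mset X (image_mset \<sigma> (mset_set {1..<n+1}))"
      by (simp del: upt_Suc add: multiset.map_comp o_def mset_map)
    also have "{1..<n+1} = {1..n}" by auto
    finally show ?thesis using permutes_image_mset[OF p] by simp
  qed
  have setx: "set xs \<subseteq> LI" unfolding xs_def using X permutes_in_image[OF p1] by auto
  have "xs = ys"
    apply (rule sorted_wrt_mset_eq[of LI le])
    using adm_antisym[OF adm] setx sw[OF p1 s1] sw[OF p2 s2] ms[OF p1] ms[OF p2]
    by (auto simp: xs_def ys_def)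
  then show ?thesis
  proof (intro ballI)
    fix i assume "xs = ys" "i \<in> {1..n}"
    then have "xs ! (i - 1) = ys ! (i - 1)" by simp
    then show "X (\<sigma>1 i) = X (\<sigma>2 i)" using \<open>i \<in> {1..n}\<close>
      by (auto simp del: upt_Suc simp: xs_def ys_def nth_upt)
  qed
qed

lemma part3_bound:
  assumes adm: "admissible le" and X: "\<forall>i\<in>{1..(n::nat)}. X i \<in> LI"
    and p1: "\<sigma>1 permutes {1..n}" and p2: "\<sigma>2 permutes {1..n}"
    and s1: "\<forall>i. 1 \<le> i \<and> i < n \<longrightarrow> le (X (\<sigma>1 i)) (X (\<sigma>1 (i+1)))"
    and s2: "\<forall>i. 1 \<le> i \<and> i < n \<longrightarrow> le (X (\<sigma>2 i)) (X (\<sigma>2 (i+1)))"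
    and eqx: "\<forall>i\<in>{1..n}. X (\<sigma>1 i) = X (\<sigma>2 i)"
    and Fmono: "\<forall>X\<in>LI. \<forall>Y\<in>LI. \<forall>Y'\<in>LI. le Y Y' \<longrightarrow> le (F X Y) (F X Y')"
    and meas: "IV_fuzzy_measure le n m"
    and i: "i \<in> {1..n}"
  shows "\<exists>j\<in>{1..n}. le (F (X (\<sigma>1 i)) (m (\<sigma>1 ` {i..n}))) (F (X (\<sigma>2 j)) (m (\<sigma>2 ` {j..n})))"
proof -
  define v where "v = X (\<sigma>1 i)"
  have vL: "v \<in> LI" using X permutes_in_image[OF p1] i v_def by auto
  have v2: "X (\<sigma>2 i) = v" using eqx i v_def by auto
  define i0 where "i0 = (LEAST k. k \<in> {1..n} \<and> X (\<sigma>2 k) = v)"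
  have i0: "i0 \<in> {1..n} \<and> X (\<sigma>2 i0) = v"
    unfolding i0_def by (rule LeastI[of _ i]) (use i v2 in auto)
  have i0le: "i0 \<le> k" if "k \<in> {1..n}" "X (\<sigma>2 k) = v" for k
    unfolding i0_def by (rule Least_le) (use that in auto)
  define S where "S = {j\<in>{1..n}. le v (X j)}"
  have L2: "X (\<sigma>2 k) \<in> LI" if "k \<in> {1..n}" for k
    using X permutes_in_image[OF p2] that by auto
  have S2: "S = \<sigma>2 ` {i0..n}"
  proof
    show "\<sigma>2 ` {i0..n} \<subseteq> S"
    proof
      fix j assume "j \<in> \<sigma>2 ` {i0..n}"
      then obtain k where k: "k \<in> {i0..n}" "j = \<sigma>2 k" by auto
      have "le v (X (\<sigma>2 k))" using sorted_mono[OF adm X p2 s2, of i0 k] i0 k by auto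
      moreover have "j \<in> {1..n}" using k i0 permutes_in_image[OF p2] by auto
      ultimately show "j \<in> S" using k S_def by auto
    qed
  next
    show "S \<subseteq> \<sigma>2 ` {i0..n}"
    proof
      fix j assume j: "j \<in> S"
      then have "j \<in> \<sigma>2 ` {1..n}" using permutes_image[OF p2] S_def by auto
      then obtain k where k: "k \<in> {1..n}" "j = \<sigma>2 k" by auto
      have "i0 \<le> k"
      proof (rule ccontr)
        assume "\<not> i0 \<le> k"
        then have "le (X (\<sigma>2 k)) v" using sorted_mono[OF adm X p2 s2, of k i0] i0 k by auto
        moreover have "le v (X (\<sigma>2 k))" using j k S_def by auto
        ultimately have "X (\<sigma>2 k) = v" using adm_antisym[OF adm] vL L2[OF k(1)] by blast
        then show False using i0le[OF k(1)] \<open>\<not> i0 \<le> k\<close> by auto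
      qed
      then show "j \<in> \<sigma>2 ` {i0..n}" using k by auto
    qed
  qed
  have sub: "\<sigma>1 ` {i..n} \<subseteq> S"
  proof
    fix j assume "j \<in> \<sigma>1 ` {i..n}"
    then obtain k where k: "k \<in> {i..n}" "j = \<sigma>1 k" by auto
    have "le v (X (\<sigma>1 k))" using sorted_mono[OF adm X p1 s1, of i k] i k v_def by auto
    moreover have "j \<in> {1..n}" using k i permutes_in_image[OF p1] by auto
    ultimately show "j \<in> S" using k S_def by auto
  qed
  have Ssub: "S \<subseteq> {1..n}" using S_def by auto
  have mle: "le (m (\<sigma>1 ` {i..n})) (m S)" using meas sub Ssub unfolding IV_fuzzy_measure_def by blast
  have mL: "m A \<in> LI" if "A \<subseteq> {1..n}" for A using meas that unfolding IV_fuzzy_measure_def by blast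
  have "le (F v (m (\<sigma>1 ` {i..n}))) (F v (m S))"
    using Fmono vL mL[of S] mL[of "\<sigma>1 ` {i..n}"] sub Ssub mle by blast
  then have "le (F (X (\<sigma>1 i)) (m (\<sigma>1 ` {i..n}))) (F (X (\<sigma>2 i0)) (m (\<sigma>2 ` {i0..n})))"
    using i0 S2 v_def by simp
  then show ?thesis using i0 by blast
qed

theorem proposition1:
  fixes n :: nat
    and le :: "ival \<Rightarrow> ival \<Rightarrow> bool"
    and F :: "ival \<Rightarrow> ival \<Rightarrow> ival"
    and G :: "ival list \<Rightarrow> ival"
    and m :: "nat set \<Rightarrow> ival"
  assumes "n \<ge> 1"
    and "admissible le"
    and "\<forall>X\<in>LI. \<forall>Y\<in>LI. F X Y \<in> LI"
    and "\<forall>xs. length xs = n \<and> set xs \<subseteq> LI \<longrightarrow> G xs \<in> LI"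
    and "IV_fuzzy_measure le n m"
  shows "(symmetric_measure n m \<longrightarrow> WDS le n m F G)
       \<and> ((\<exists>f. (\<forall>x\<in>LI. f x \<in> LI) \<and>
               (\<forall>xs. length xs = n \<and> set xs \<subseteq> LI \<longrightarrow> G xs = f (hd xs)))
            \<longrightarrow> WDS le n m F G)
       \<and> (((\<forall>X\<in>LI. \<forall>Y\<in>LI. \<forall>Y'\<in>LI. le Y Y' \<longrightarrow> le (F X Y) (F X Y')) \<and>
            (\<exists>f. (\<forall>x\<in>LI. f x \<in> LI) \<and>
               (\<forall>xs. length xs = n \<and> set xs \<subseteq> LI \<longrightarrow> G xs = f (ivmax le xs))))
            \<longrightarrow> WDS le n m F G)"
proof -
  note adm = assms(2)
  have mL: "m A \<in> LI" if "A \<subseteq> {1..n}" for A using assms(5) that unfolding IV_fuzzy_measure_def by blast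
  have listL: "set (map (\<lambda>i. F (X (\<sigma> i)) (m (\<sigma> ` {i..n}))) [1..<n+1]) \<subseteq> LI"
    if X: "\<forall>i\<in>{1..n}. X i \<in> LI" and p: "\<sigma> permutes {1..n}" for X \<sigma>
  proof -
    have "F (X (\<sigma> i)) (m (\<sigma> ` {i..n})) \<in> LI" if "i \<in> {1..n}" for i
    proof -
      have "\<sigma> ` {i..n} \<subseteq> {1..n}" using permutes_image[OF p] that by auto
      then show ?thesis using assms(3) mL X permutes_in_image[OF p] that by auto
    qed
    then show ?thesis by (auto simp del: upt_Suc)
  qed
  have P1: "WDS le n m F G" if sym: "symmetric_measure n m"
    unfolding WDS_def
  proof (intro allI impI)
    fix X \<sigma>1 \<sigma>2
    assume H: "(\<forall>i\<in>{1..n}. X i \<in> LI) \<and> \<sigma>1 permutes {1..n} \<and> \<sigma>2 permutes {1..n} \<and>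
        (\<forall>i. 1 \<le> i \<and> i < n \<longrightarrow> le (X (\<sigma>1 i)) (X (\<sigma>1 (i + 1)))) \<and>
        (\<forall>i. 1 \<le> i \<and> i < n \<longrightarrow> le (X (\<sigma>2 i)) (X (\<sigma>2 (i + 1))))"
    have eqx: "\<forall>i\<in>{1..n}. X (\<sigma>1 i) = X (\<sigma>2 i)" using sorted_eq[OF adm] H by blast
    have "m (\<sigma>1 ` {i..n}) = m (\<sigma>2 ` {i..n})" if "i \<in> {1..n}" for i
    proof -
      have "inj_on \<sigma>1 {i..n}" "inj_on \<sigma>2 {i..n}"
        using H permutes_inj by (metis inj_on_subset subset_UNIV)+
      then have "card (\<sigma>1 ` {i..n}) = card (\<sigma>2 ` {i..n})" by (simp add: card_image)
      moreover have "\<sigma>1 ` {i..n} \<subseteq> {1..n}" "\<sigma>2 ` {i..n} \<subseteq> {1..n}"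
        using H permutes_image[of \<sigma>1 "{1..n}"] permutes_image[of \<sigma>2 "{1..n}"] that by auto
      ultimately show ?thesis using sym unfolding symmetric_measure_def by blast
    qed
    then show "G (map (\<lambda>i. F (X (\<sigma>1 i)) (m (\<sigma>1 ` {i..n}))) [1..<n + 1]) =
               G (map (\<lambda>i. F (X (\<sigma>2 i)) (m (\<sigma>2 ` {i..n}))) [1..<n + 1])"
      using eqx by (intro arg_cong[where f=G] map_cong) (auto simp del: upt_Suc)
  qed
  have P2: "WDS le n m F G" if f: "\<forall>xs. length xs = n \<and> set xs \<subseteq> LI \<longrightarrow> G xs = f (hd xs)" for f
    unfolding WDS_def
  proof (intro allI impI)
    fix X \<sigma>1 \<sigma>2
    assume H: "(\<forall>i\<in>{1..n}. X i \<in> LI) \<and> \<sigma>1 permutes {1..n} \<and> \<sigma>2 permutes {1..n} \<and>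
        (\<forall>i. 1 \<le> i \<and> i < n \<longrightarrow> le (X (\<sigma>1 i)) (X (\<sigma>1 (i + 1)))) \<and>
        (\<forall>i. 1 \<le> i \<and> i < n \<longrightarrow> le (X (\<sigma>2 i)) (X (\<sigma>2 (i + 1))))"
    have eqx: "\<forall>i\<in>{1..n}. X (\<sigma>1 i) = X (\<sigma>2 i)" using sorted_eq[OF adm] H by blast
    have hd: "hd (map (\<lambda>i. F (X (\<sigma> i)) (m (\<sigma> ` {i..n}))) [1..<n+1]) = F (X (\<sigma> 1)) (m {1..n})"
      if p: "\<sigma> permutes {1..n}" for \<sigma>
      using assms(1) permutes_image[OF p] by (simp add: upt_rec)
    show "G (map (\<lambda>i. F (X (\<sigma>1 i)) (m (\<sigma>1 ` {i..n}))) [1..<n + 1]) =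
          G (map (\<lambda>i. F (X (\<sigma>2 i)) (m (\<sigma>2 ` {i..n}))) [1..<n + 1])"
      using f listL[of X \<sigma>1] listL[of X \<sigma>2] H hd[of \<sigma>1] hd[of \<sigma>2] eqx assms(1) by simp
  qed
  have P3: "WDS le n m F G" if Fmono: "\<forall>X\<in>LI. \<forall>Y\<in>LI. \<forall>Y'\<in>LI. le Y Y' \<longrightarrow> le (F X Y) (F X Y')"
     and f: "\<forall>xs. length xs = n \<and> set xs \<subseteq> LI \<longrightarrow> G xs = f (ivmax le xs)" for f
    unfolding WDS_def
  proof (intro allI impI)
    fix X \<sigma>1 \<sigma>2
    assume H: "(\<forall>i\<in>{1..n}. X i \<in> LI) \<and> \<sigma>1 permutes {1..n} \<and> \<sigma>2 permutes {1..n} \<and>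
        (\<forall>i. 1 \<le> i \<and> i < n \<longrightarrow> le (X (\<sigma>1 i)) (X (\<sigma>1 (i + 1)))) \<and>
        (\<forall>i. 1 \<le> i \<and> i < n \<longrightarrow> le (X (\<sigma>2 i)) (X (\<sigma>2 (i + 1))))"
    have eqx: "\<forall>i\<in>{1..n}. X (\<sigma>1 i) = X (\<sigma>2 i)" using sorted_eq[OF adm] H by blast
    have gen: "le (ivmax le (map (\<lambda>i. F (X (\<tau>1 i)) (m (\<tau>1 ` {i..n}))) [1..<n+1]))
                  (ivmax le (map (\<lambda>i. F (X (\<tau>2 i)) (m (\<tau>2 ` {i..n}))) [1..<n+1]))"
      if p1: "\<tau>1 permutes {1..n}" and p2: "\<tau>2 permutes {1..n}"
        and s1: "\<forall>i. 1 \<le> i \<and> i < n \<longrightarrow> le (X (\<tau>1 i)) (X (\<tau>1 (i+1)))"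
        and s2: "\<forall>i. 1 \<le> i \<and> i < n \<longrightarrow> le (X (\<tau>2 i)) (X (\<tau>2 (i+1)))"
        and e: "\<forall>i\<in>{1..n}. X (\<tau>1 i) = X (\<tau>2 i)" for \<tau>1 \<tau>2
    proof -
      define A where "A = map (\<lambda>i. F (X (\<tau>1 i)) (m (\<tau>1 ` {i..n}))) [1..<n+1]"
      define B where "B = map (\<lambda>i. F (X (\<tau>2 i)) (m (\<tau>2 ` {i..n}))) [1..<n+1]"
      have AL: "set A \<subseteq> LI" "A \<noteq> []" using listL[of X \<tau>1] H p1 assms(1) A_def by auto
      have BL: "set B \<subseteq> LI" "B \<noteq> []" using listL[of X \<tau>2] H p2 assms(1) B_def by auto
      obtain i where i: "i \<in> {1..n}" "ivmax le A = F (X (\<tau>1 i)) (m (\<tau>1 ` {i..n}))"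
      proof -
        have "ivmax le A \<in> set A" using ivmax_prop[OF adm AL(2,1)] by blast
        then obtain x where "x \<in> {1..<n+1}" "ivmax le A = F (X (\<tau>1 x)) (m (\<tau>1 ` {x..n}))"
          using A_def by (auto simp del: upt_Suc)
        then show ?thesis using that[of x] by auto
      qed
      obtain j where j: "j \<in> {1..n}"
        "le (F (X (\<tau>1 i)) (m (\<tau>1 ` {i..n}))) (F (X (\<tau>2 j)) (m (\<tau>2 ` {j..n})))"
        using part3_bound[OF adm _ p1 p2 s1 s2 e Fmono assms(5) i(1)] H by blast
      have bj: "F (X (\<tau>2 j)) (m (\<tau>2 ` {j..n})) \<in> set B" using j B_def by (auto simp del: upt_Suc)
      then have "le (F (X (\<tau>2 j)) (m (\<tau>2 ` {j..n}))) (ivmax le B)" using ivmax_prop[OF adm BL(2,1)] by blast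
      moreover have "ivmax le A \<in> LI" "ivmax le B \<in> LI"
        using ivmax_prop[OF adm AL(2,1)] ivmax_prop[OF adm BL(2,1)] AL BL by blast+
      ultimately show ?thesis using adm_trans[OF adm] j i bj BL unfolding A_def[symmetric] B_def[symmetric]
        by (metis subsetD)
    qed
    have e2: "\<forall>i\<in>{1..n}. X (\<sigma>2 i) = X (\<sigma>1 i)" using eqx by auto
    define A where "A = map (\<lambda>i. F (X (\<sigma>1 i)) (m (\<sigma>1 ` {i..n}))) [1..<n+1]"
    define B where "B = map (\<lambda>i. F (X (\<sigma>2 i)) (m (\<sigma>2 ` {i..n}))) [1..<n+1]"
    have g1: "le (ivmax le A) (ivmax le B)" unfolding A_def B_def using gen H eqx by blast
    have g2: "le (ivmax le B) (ivmax le A)" unfolding A_def B_def using gen H e2 by blast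
    have AL: "set A \<subseteq> LI" "A \<noteq> []" using listL[of X \<sigma>1] H assms(1) A_def by auto
    have BL: "set B \<subseteq> LI" "B \<noteq> []" using listL[of X \<sigma>2] H assms(1) B_def by auto
    have "ivmax le A \<in> LI" "ivmax le B \<in> LI"
      using ivmax_prop[OF adm AL(2,1)] ivmax_prop[OF adm BL(2,1)] AL BL by blast+
    then have "ivmax le A = ivmax le B" using adm_antisym[OF adm] g1 g2 by blast
    moreover have "length A = n" "length B = n" using A_def B_def by auto
    ultimately show "G A = G B" using f AL BL by simp
  qed
  show ?thesis using P1 P2 P3 by blast
qed

end
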